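(* Let $r\ge4$ and $s\in\{2,\dots,r-1\}$, and let $A=\{a_1,\dots,a_s\}$ and $B=\{b_1,\dots,b_s\}$ be two different $s$-partitions of $r$. Then the graphs $\widehat K_r(A)$ and $\widehat K_r(B)$ are non-isomorphic, and they are isospectral both for the standard Laplacian and for the signless standard Laplacian.
   Context: An $s$-partition of $r\in\mathbb N$ is a multiset $\{a_1,\dots,a_s\}$ of positive integers with $a_1+\dots+a_s=r$. $\widehat K_r$ is the graph obtained from the complete graph $K_r$ (vertices $w_1,\dots,w_r$) by attaching a pendant vertex $v_i$ to each $w_i$ via an edge $\{w_i,v_i\}$. For an $s$-partition $A=\{a_1,\dots,a_s\}$ of $r$, $\widehat K_r(A)$ is the quotient graph obtained from $\widehat K_r$ by contracting (identifying) the vertex sets $\{v_1,\dots,v_{a_1}\}$, $\{v_{a_1+1},\dots,v_{a_1+a_2}\}$, …, $\{v_{a_1+\dots+a_{s-1}+1},\dots,v_r\}$ each into a single vertex, keeping all edges; thus $\widehat K_r(A)$ consists of $K_r$ together with $s$ further vertices, the $j$-th adjacent exactly to the $a_j$ vertices $w_i$ of the $j$-th block. The standard Laplacian is $(\Delta_G f)(v)=f(v)-\frac{1}{\deg v}\sum_{u\in N_v}f(u)$ and the signless standard Laplacian is $(\Delta_{G^+}f)(v)=f(v)+\frac{1}{\deg v}\sum_{u\in N_v}f(u)$ (equivalently $I\mp D^{-1/2}AD^{-1/2}$). Two graphs are isospectral for an operator if the operators have the same eigenvalues with multiplicities. *)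

theory Defs
  imports "HOL-Library.Multiset" "Jordan_Normal_Form.Char_Poly"
begin

definition graph_iso :: "'a set \<Rightarrow> ('a \<Rightarrow> 'a \<Rightarrow> bool) \<Rightarrow> 'b set \<Rightarrow> ('b \<Rightarrow> 'b \<Rightarrow> bool) \<Rightarrow> bool" where
  "graph_iso V E W F \<longleftrightarrow>
     (\<exists>f. bij_betw f V W \<and> (\<forall>u\<in>V. \<forall>v\<in>V. E u v \<longleftrightarrow> F (f u) (f v)))"

definition gdeg :: "nat \<Rightarrow> (nat \<Rightarrow> nat \<Rightarrow> bool) \<Rightarrow> nat \<Rightarrow> nat" where
  "gdeg n E v = card {u. u < n \<and> E v u}"

definition std_laplacian :: "nat \<Rightarrow> (nat \<Rightarrow> nat \<Rightarrow> bool) \<Rightarrow> real mat" where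
  "std_laplacian n E = mat n n (\<lambda>(v,u).
      (if v = u then 1 else 0) - (if E v u then 1 / real (gdeg n E v) else 0))"

definition signless_std_laplacian :: "nat \<Rightarrow> (nat \<Rightarrow> nat \<Rightarrow> bool) \<Rightarrow> real mat" where
  "signless_std_laplacian n E = mat n n (\<lambda>(v,u).
      (if v = u then 1 else 0) + (if E v u then 1 / real (gdeg n E v) else 0))"

(* Isospectral: same eigenvalues with (algebraic) multiplicities, i.e. equal characteristic
   polynomials. *)
definition isospectral :: "real mat \<Rightarrow> real mat \<Rightarrow> bool" where
  "isospectral M N \<longleftrightarrow> char_poly M = char_poly N"

definition is_partition :: "nat \<Rightarrow> nat \<Rightarrow> nat multiset \<Rightarrow> bool" where
  "is_partition s r A \<longleftrightarrow> size A = s \<and> (\<forall>a\<in>#A. 0 < a) \<and> sum_mset A = r"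

(* For a list of block sizes as = [a_1,...,a_s], vertex i < r (i.e. w_{i+1}) lies in block j < s
   iff a_1+...+a_j \<le> i < a_1+...+a_{j+1}. *)
definition in_block :: "nat list \<Rightarrow> nat \<Rightarrow> nat \<Rightarrow> bool" where
  "in_block as j i \<longleftrightarrow> j < length as \<and> sum_list (take j as) \<le> i \<and> i < sum_list (take (Suc j) as)"

(* Khat_r(A): vertices 0..r-1 are w_1..w_r (forming K_r), vertices r..r+s-1 are the s
   contracted vertices; vertex r+j is adjacent exactly to the w_i of the j-th block.
   The blocks are taken in the order of the sorted list of the multiset A. *)
definition Khat_adj :: "nat \<Rightarrow> nat multiset \<Rightarrow> nat \<Rightarrow> nat \<Rightarrow> bool" where
  "Khat_adj r A u v \<longleftrightarrow>
     (let as = sorted_list_of_multiset A in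
       (u < r \<and> v < r \<and> u \<noteq> v)
     \<or> (u < r \<and> r \<le> v \<and> in_block as (v - r) u)
     \<or> (v < r \<and> r \<le> u \<and> in_block as (u - r) v))"

definition Khat_card :: "nat \<Rightarrow> nat multiset \<Rightarrow> nat" where
  "Khat_card r A = r + size A"

end

theory Submission
  imports Defs
begin

lemma sum_take_mono: "j \<le> k \<Longrightarrow> sum_list (take j xs) \<le> sum_list (take k (xs::nat list))"
proof -
  assume "j \<le> k"
  then obtain d where "k = j + d" by (metis le_add_diff_inverse)
  then show ?thesis by (simp add: take_add)
qed

lemma in_block_unique: "in_block as j u \<Longrightarrow> in_block as j' u \<Longrightarrow> j = j'"
proof (rule ccontr)
  assume h: "in_block as j u" "in_block as j' u" "j \<noteq> j'"
  { fix p q assume a: "in_block as p u" "in_block as q u" "p < q"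
    then have "sum_list (take (Suc p) as) \<le> sum_list (take q as)" by (intro sum_take_mono) auto
    with a have False unfolding in_block_def by auto }
  with h show False by (metis linorder_neqE_nat)
qed

lemma in_block_exists: "u < sum_list as \<Longrightarrow> \<exists>j. in_block as j u"
proof (induction as arbitrary: u)
  case Nil then show ?case by simp
next
  case (Cons a as)
  show ?case
  proof (cases "u < a")
    case True
    then have "in_block (a#as) 0 u" unfolding in_block_def by simp
    then show ?thesis by blast
  next
    case False
    with Cons.prems have "u - a < sum_list as" by simp
    from Cons.IH[OF this] obtain j where "in_block as j (u - a)" by blast
    then have "in_block (a#as) (Suc j) u" using False unfolding in_block_def by auto
    then show ?thesis by blast
  qed
qed

definition blk :: "nat list \<Rightarrow> nat \<Rightarrow> nat" where
  "blk as u = (THE j. in_block as j u)"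

lemma blk_in_block: "u < sum_list as \<Longrightarrow> in_block as (blk as u) u"
  unfolding blk_def by (metis in_block_exists in_block_unique theI)

lemma blk_eq: "in_block as j u \<Longrightarrow> blk as u = j"
  unfolding blk_def by (metis in_block_unique the_equality)

lemma blk_lt: "u < sum_list as \<Longrightarrow> blk as u < length as"
  using blk_in_block unfolding in_block_def by blast

lemma in_block_iff: "u < sum_list as \<Longrightarrow> in_block as j u \<longleftrightarrow> (j < length as \<and> blk as u = j)"
  using blk_in_block blk_eq blk_lt by metis

lemma blk_card: assumes "j < length as"
  shows "card {u. u < sum_list as \<and> blk as u = j} = as ! j"
proof -
  have st: "sum_list (take (Suc j) as) = sum_list (take j as) + as ! j"
    using assms by (simp add: take_Suc_conv_app_nth)
  have le: "sum_list (take (Suc j) as) \<le> sum_list as"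
    using sum_take_mono[of "Suc j" "length as" as] assms by simp
  have "{u. u < sum_list as \<and> blk as u = j} = {sum_list (take j as) ..< sum_list (take (Suc j) as)}"
  proof (intro subsetI equalityI)
    fix u assume "u \<in> {u. u < sum_list as \<and> blk as u = j}"
    then have "in_block as j u" using blk_in_block by blast
    then show "u \<in> {sum_list (take j as) ..< sum_list (take (Suc j) as)}" unfolding in_block_def by auto
  next
    fix u assume u: "u \<in> {sum_list (take j as) ..< sum_list (take (Suc j) as)}"
    then have "in_block as j u" using assms unfolding in_block_def by auto
    then have "blk as u = j" by (rule blk_eq)
    then show "u \<in> {u. u < sum_list as \<and> blk as u = j}" using u le by auto
  qed
  then show ?thesis using st by simp
qed


definition Egr :: "nat \<Rightarrow> nat \<Rightarrow> (nat \<Rightarrow> nat) \<Rightarrow> nat \<Rightarrow> nat \<Rightarrow> bool" where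
  "Egr r s g v u \<longleftrightarrow> (v < r \<and> u < r \<and> v \<noteq> u) \<or> (v < r \<and> r \<le> u \<and> u < r + s \<and> g v = u - r)
     \<or> (u < r \<and> r \<le> v \<and> v < r + s \<and> g u = v - r)"

lemma Khat_Egr:
  assumes "as = sorted_list_of_multiset A" "r = sum_list as" "s = length as"
  shows "Khat_adj r A = Egr r s (blk as)"
proof (intro ext)
  fix u v
  have 1: "u < r \<Longrightarrow> in_block as j u \<longleftrightarrow> (j < s \<and> blk as u = j)" for u j
    using in_block_iff assms by metis
  show "Khat_adj r A u v = Egr r s (blk as) u v"
    unfolding Khat_adj_def Egr_def Let_def assms(1)[symmetric]
    using 1[of u "v - r"] 1[of v "u - r"] by auto
qed

lemma sum_split: "(\<Sum>m<r+(s::nat). h m) = (\<Sum>m<r. h m) + (\<Sum>j<s. h (r + j)) "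
  by (induction s) (auto simp: add.assoc)

lemma nbr_w: assumes glt: "\<And>u. u < r \<Longrightarrow> g u < s" and v: "v < r"
  shows "{u. u < r + s \<and> Egr r s g v u} = insert (r + g v) ({..<r} - {v})"
  using glt[OF v] v unfolding Egr_def by auto

lemma nbr_c: assumes "r \<le> v" "v < r + s"
  shows "{u. u < r + s \<and> Egr r s g v u} = {u. u < r \<and> g u = v - r}"
  using assms unfolding Egr_def by auto

lemma deg_w: assumes glt: "\<And>u. u < r \<Longrightarrow> g u < s" and v: "v < r"
  shows "gdeg (r + s) (Egr r s g) v = r"
proof -
  have "card (insert (r + g v) ({..<r} - {v})) = Suc (card ({..<r} - {v}))" by simp
  also have "\<dots> = r" using v by simp
  finally show ?thesis by (simp add: gdeg_def nbr_w[OF glt v])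
qed

lemma deg_c: assumes "r \<le> v" "v < r + s"
  shows "gdeg (r + s) (Egr r s g) v = card {u. u < r \<and> g u = v - r}"
  unfolding gdeg_def nbr_c[OF assms] ..

definition app :: "nat \<Rightarrow> (nat \<times> nat \<Rightarrow> real) \<Rightarrow> (nat \<Rightarrow> real) \<Rightarrow> nat \<Rightarrow> real" where
  "app n f X i = (\<Sum>m<n. f (i, m) * X m)"

definition avg :: "nat \<Rightarrow> (nat \<Rightarrow> nat) \<Rightarrow> (nat \<Rightarrow> real) \<Rightarrow> nat \<Rightarrow> real" where
  "avg r g X j = (\<Sum>u\<in>{u. u < r \<and> g u = j}. X u) / real (card {u. u < r \<and> g u = j})"

definition Nx :: "nat \<Rightarrow> nat \<Rightarrow> (nat \<Rightarrow> nat) \<Rightarrow> (nat \<Rightarrow> real) \<Rightarrow> nat \<Rightarrow> real" where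
  "Nx r s g X v = (if v < r then ((\<Sum>u<r. X u) - X v + X (r + g v)) / real r else avg r g X (v - r))"

definition nf :: "nat \<Rightarrow> nat \<Rightarrow> (nat \<Rightarrow> nat) \<Rightarrow> nat \<times> nat \<Rightarrow> real" where
  "nf r s g = (\<lambda>(v,u). if Egr r s g v u then 1 / real (gdeg (r + s) (Egr r s g) v) else 0)"

lemma app_nf: assumes glt: "\<And>u. u < r \<Longrightarrow> g u < s" and v: "v < r + s"
  shows "app (r + s) (nf r s g) X v = Nx r s g X v"
proof (cases "v < r")
  case True
  have "app (r + s) (nf r s g) X v = (\<Sum>m<r. nf r s g (v,m) * X m) + (\<Sum>j<s. nf r s g (v, r+j) * X (r+j))"
    unfolding app_def by (rule sum_split)
  also have "(\<Sum>m<r. nf r s g (v,m) * X m) = (\<Sum>m<r. (if m = v then 0 else X m / real r))"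
    by (rule sum.cong) (use True deg_w[OF glt True] in \<open>auto simp: nf_def Egr_def\<close>)
  also have "\<dots> = ((\<Sum>m<r. X m) - X v) / real r"
  proof -
    have "(\<Sum>m<r. X m) = X v + (\<Sum>m\<in>{..<r} - {v}. X m)" using True by (simp add: sum.remove)
    moreover have "(\<Sum>m<r. (if m = v then 0 else X m / real r)) = (\<Sum>m\<in>{..<r} - {v}. X m / real r)"
      using True by (simp add: sum.If_cases Diff_eq)
    ultimately show ?thesis by (simp add: sum_divide_distrib)
  qed
  also have "(\<Sum>j<s. nf r s g (v, r+j) * X (r+j)) = (\<Sum>j<s. if j = g v then X (r + g v) / real r else 0)"
    by (rule sum.cong) (use True deg_w[OF glt True] in \<open>auto simp: nf_def Egr_def\<close>)
  also have "\<dots> = X (r + g v) / real r" using glt[OF True] by simp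
  finally show ?thesis unfolding Nx_def using True by (simp add: add_divide_distrib diff_divide_distrib)
next
  case False
  have "app (r + s) (nf r s g) X v = (\<Sum>m<r. nf r s g (v,m) * X m) + (\<Sum>j<s. nf r s g (v, r+j) * X (r+j))"
    unfolding app_def by (rule sum_split)
  also have "(\<Sum>j<s. nf r s g (v, r+j) * X (r+j)) = 0"
    by (rule sum.neutral) (use False in \<open>auto simp: nf_def Egr_def\<close>)
  also have "(\<Sum>m<r. nf r s g (v,m) * X m) = (\<Sum>m<r. if g m = v - r then X m / real (card {u. u < r \<and> g u = v - r}) else 0)"
    by (rule sum.cong) (use False v deg_c[of r v s g] in \<open>auto simp: nf_def Egr_def\<close>)
  also have "\<dots> = (\<Sum>m\<in>{m. m < r \<and> g m = v - r}. X m / real (card {u. u < r \<and> g u = v - r}))"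
    by (subst sum.inter_filter[symmetric]) (auto simp: lessThan_def)
  finally show ?thesis unfolding Nx_def avg_def using False by (simp add: sum_divide_distrib)
qed


lemma char_poly_intertwine:
  fixes P X Y :: "real mat"
  assumes P: "P \<in> carrier_mat n n" and X: "X \<in> carrier_mat n n" and Y: "Y \<in> carrier_mat n n"
    and d: "det P \<noteq> 0" and PXY: "P * X = Y * P"
  shows "char_poly X = char_poly Y"
proof -
  have "P \<in> Units (ring_mat TYPE(real) n ())" by (rule det_non_zero_imp_unit[OF P d])
  then obtain Q where Q: "Q \<in> carrier_mat n n" and QP: "Q * P = 1\<^sub>m n" and PQ: "P * Q = 1\<^sub>m n"
    unfolding Units_def ring_mat_def by auto
  have "Y = Y * (P * Q)" using Y PQ by simp
  also have "\<dots> = (Y * P) * Q" using Y P Q by simp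
  also have "\<dots> = P * X * Q" using PXY by simp
  finally have "Y = P * X * Q" .
  then have "similar_mat Y X" by (intro similar_matI[of Y X P Q n]) (use P Q X Y PQ QP in auto)
  then show ?thesis using char_poly_similar by metis
qed

locale blocks =
  fixes r s :: nat and \<alpha> \<beta> :: "nat \<Rightarrow> nat"
  assumes \<alpha>_lt: "\<And>u. u < r \<Longrightarrow> \<alpha> u < s" and \<beta>_lt: "\<And>u. u < r \<Longrightarrow> \<beta> u < s"
    and ca_pos: "\<And>j. j < s \<Longrightarrow> 0 < card {u. u < r \<and> \<alpha> u = j}"
    and cb_pos: "\<And>j. j < s \<Longrightarrow> 0 < card {u. u < r \<and> \<beta> u = j}"
    and s_pos: "0 < s"
begin

abbreviation "fibA j \<equiv> {u. u < r \<and> \<alpha> u = j}"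
abbreviation "fibB j \<equiv> {u. u < r \<and> \<beta> u = j}"

definition "a j = real (card (fibA j))"
definition "b j = real (card (fibB j))"

lemma a_pos: "j < s \<Longrightarrow> a j > 0" using ca_pos unfolding a_def by simp
lemma b_pos: "j < s \<Longrightarrow> b j > 0" using cb_pos unfolding b_def by simp

lemma fibA_ne: assumes "j < s" shows "\<exists>u. u < r \<and> \<alpha> u = j"
proof -
  have "fibA j \<noteq> {}" using ca_pos[OF assms] by (metis card.empty less_irrefl)
  then show ?thesis by blast
qed
lemma fibB_ne: assumes "j < s" shows "\<exists>u. u < r \<and> \<beta> u = j"
proof -
  have "fibB j \<noteq> {}" using cb_pos[OF assms] by (metis card.empty less_irrefl)
  then show ?thesis by blast
qed

lemma groupA: "(\<Sum>k<r. h k) = (\<Sum>j<s. \<Sum>k\<in>fibA j. h k)"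
proof -
  have "(\<Sum>j\<in>{..<s}. sum h {x. x \<in> {..<r} \<and> \<alpha> x = j}) = sum h {..<r}"
    by (rule sum.group) (auto simp: \<alpha>_lt)
  then show ?thesis by simp
qed

lemma groupB: "(\<Sum>k<r. h k) = (\<Sum>j<s. \<Sum>k\<in>fibB j. h k)"
proof -
  have "(\<Sum>j\<in>{..<s}. sum h {x. x \<in> {..<r} \<and> \<beta> x = j}) = sum h {..<r}"
    by (rule sum.group) (auto simp: \<beta>_lt)
  then show ?thesis by simp
qed

lemma sum_a: "(\<Sum>j<s. a j) = real r"
  using groupA[of "\<lambda>_. 1::real"] unfolding a_def by simp
lemma sum_b: "(\<Sum>j<s. b j) = real r"
  using groupB[of "\<lambda>_. 1::real"] unfolding b_def by simp

definition "firstA j = (LEAST u. u < r \<and> \<alpha> u = j)"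
definition "firstB j = (LEAST u. u < r \<and> \<beta> u = j)"

lemma firstA: assumes "j < s" shows "firstA j < r \<and> \<alpha> (firstA j) = j"
proof -
  obtain u where "u < r \<and> \<alpha> u = j" using fibA_ne[OF assms] by blast
  then show ?thesis unfolding firstA_def by (rule LeastI[where P = "\<lambda>u. u < r \<and> \<alpha> u = j"])
qed
lemma firstB: assumes "j < s" shows "firstB j < r \<and> \<beta> (firstB j) = j"
proof -
  obtain u where "u < r \<and> \<beta> u = j" using fibB_ne[OF assms] by blast
  then show ?thesis unfolding firstB_def by (rule LeastI[where P = "\<lambda>u. u < r \<and> \<beta> u = j"])
qed

definition "fA m = firstA (\<alpha> m)"
definition "fB m = firstB (\<beta> m)"

lemma fA: "m < r \<Longrightarrow> fA m < r \<and> \<alpha> (fA m) = \<alpha> m \<and> fA (fA m) = fA m"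
  unfolding fA_def using firstA \<alpha>_lt by simp
lemma fB: "m < r \<Longrightarrow> fB m < r \<and> \<beta> (fB m) = \<beta> m \<and> fB (fB m) = fB m"
  unfolding fB_def using firstB \<beta>_lt by simp

definition "NFA = {m. m < r \<and> m \<noteq> fA m}"
definition "NFB = {m. m < r \<and> m \<noteq> fB m}"

lemma card_NFA: "card NFA = r - s"
proof -
  have e: "NFA = {..<r} - firstA ` {..<s}"
  proof (intro equalityI subsetI)
    fix m assume "m \<in> NFA"
    then have m: "m < r" "m \<noteq> firstA (\<alpha> m)" unfolding NFA_def fA_def by auto
    have "m \<notin> firstA ` {..<s}"
    proof
      assume "m \<in> firstA ` {..<s}"
      then obtain j where j: "j < s" "m = firstA j" by auto
      have "\<alpha> (firstA j) = j" using firstA[OF j(1)] by blast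
      then have "firstA (\<alpha> m) = m" using j(2) by metis
      then show False using m(2) by metis
    qed
    then show "m \<in> {..<r} - firstA ` {..<s}" using m by simp
  next
    fix m assume "m \<in> {..<r} - firstA ` {..<s}"
    then have "m < r" "m \<noteq> firstA (\<alpha> m)" using \<alpha>_lt by auto
    then show "m \<in> NFA" unfolding NFA_def fA_def by simp
  qed
  have inj: "inj_on firstA {..<s}"
  proof (rule inj_onI)
    fix x y assume "x \<in> {..<s}" "y \<in> {..<s}" "firstA x = firstA y"
    then have "x < s" "y < s" "firstA x = firstA y" by auto
    then have "\<alpha> (firstA x) = x" "\<alpha> (firstA y) = y" using firstA by blast+
    then show "x = y" using \<open>firstA x = firstA y\<close> by metis
  qed
  have sub: "firstA ` {..<s} \<subseteq> {..<r}" using firstA by auto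
  have c: "card (firstA ` {..<s}) = s" using card_image[OF inj] by simp
  have "card ({..<r} - firstA ` {..<s}) = card {..<r} - card (firstA ` {..<s})"
    by (rule card_Diff_subset) (simp_all add: sub)
  then show ?thesis unfolding e c by simp
qed

lemma card_NFB: "card NFB = r - s"
proof -
  have e: "NFB = {..<r} - firstB ` {..<s}"
  proof (intro equalityI subsetI)
    fix m assume "m \<in> NFB"
    then have m: "m < r" "m \<noteq> firstB (\<beta> m)" unfolding NFB_def fB_def by auto
    have "m \<notin> firstB ` {..<s}"
    proof
      assume "m \<in> firstB ` {..<s}"
      then obtain j where j: "j < s" "m = firstB j" by auto
      have "\<beta> (firstB j) = j" using firstB[OF j(1)] by blast
      then have "firstB (\<beta> m) = m" using j(2) by metis
      then show False using m(2) by metis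
    qed
    then show "m \<in> {..<r} - firstB ` {..<s}" using m by simp
  next
    fix m assume "m \<in> {..<r} - firstB ` {..<s}"
    then have "m < r" "m \<noteq> firstB (\<beta> m)" using \<beta>_lt by auto
    then show "m \<in> NFB" unfolding NFB_def fB_def by simp
  qed
  have inj: "inj_on firstB {..<s}"
  proof (rule inj_onI)
    fix x y assume "x \<in> {..<s}" "y \<in> {..<s}" "firstB x = firstB y"
    then have "x < s" "y < s" "firstB x = firstB y" by auto
    then have "\<beta> (firstB x) = x" "\<beta> (firstB y) = y" using firstB by blast+
    then show "x = y" using \<open>firstB x = firstB y\<close> by metis
  qed
  have sub: "firstB ` {..<s} \<subseteq> {..<r}" using firstB by auto
  have c: "card (firstB ` {..<s}) = s" using card_image[OF inj] by simp
  have "card ({..<r} - firstB ` {..<s}) = card {..<r} - card (firstB ` {..<s})"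
    by (rule card_Diff_subset) (simp_all add: sub)
  then show ?thesis unfolding e c by simp
qed

definition "\<rho> = (SOME g. bij_betw g NFB NFA)"

lemma rho_bij: "bij_betw \<rho> NFB NFA"
proof -
  have "\<exists>g. bij_betw g NFB NFA"
  proof (rule finite_same_card_bij)
    show "finite NFB" "finite NFA" unfolding NFA_def NFB_def by auto
    show "card NFB = card NFA" by (simp add: card_NFA card_NFB)
  qed
  then show ?thesis unfolding \<rho>_def by (rule someI_ex)
qed

lemma rho_in: "i \<in> NFB \<Longrightarrow> \<rho> i \<in> NFA" using rho_bij by (meson bij_betwE)
lemma rho_lt: "i \<in> NFB \<Longrightarrow> \<rho> i < r" using rho_in unfolding NFA_def by auto
lemma rho_surj: "m \<in> NFA \<Longrightarrow> \<exists>i\<in>NFB. \<rho> i = m"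
  using bij_betw_imp_surj_on[OF rho_bij] by (metis imageE)

definition D :: "(nat \<Rightarrow> real) \<Rightarrow> nat \<Rightarrow> real" where "D X m = X m - X (fA m)"

definition Wf :: "(nat \<Rightarrow> real) \<Rightarrow> nat \<Rightarrow> real" where "Wf X i = (if i \<in> NFB then D X (\<rho> i) else - (\<Sum>i'\<in>{i'\<in>NFB. \<beta> i' = \<beta> i}. D X (\<rho> i')))"

definition Vapp :: "(nat \<Rightarrow> real) \<Rightarrow> nat \<Rightarrow> real" where "Vapp c j = c j + (if j = 0 then (\<Sum>j'<s. (a j' - b j') * c j') / b 0 else 0)"

definition Papp :: "(nat \<Rightarrow> real) \<Rightarrow> nat \<Rightarrow> real" where "Papp X i = (if i < r then Vapp (avg r \<alpha> X) (\<beta> i) + Wf X i else Vapp (\<lambda>j. X (r + j)) (i - r))"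


lemma Vapp_cong: "(\<And>j. j < s \<Longrightarrow> c j = c' j) \<Longrightarrow> j0 < s \<Longrightarrow> Vapp c j0 = Vapp c' j0"
  unfolding Vapp_def by (auto intro!: sum.cong)

lemma sum_ab: "(\<Sum>j<s. (a j - b j)) = 0"
  using sum_a sum_b by (simp add: sum_subtractf)

lemma Vapp_aff: assumes j0: "j0 < s" shows "Vapp (\<lambda>j. (p - c j + z j) / q) j0 = (p - Vapp c j0 + Vapp z j0) / q"
proof -
  define Sc where "Sc = (\<Sum>j<s. (a j - b j) * c j)"
  define Sz where "Sz = (\<Sum>j<s. (a j - b j) * z j)"
  have "(\<Sum>j<s. (a j - b j) * ((p - c j + z j) / q))
      = (\<Sum>j<s. p * (a j - b j) - (a j - b j) * c j + (a j - b j) * z j) / q"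
    by (simp add: sum_divide_distrib algebra_simps)
  also have "\<dots> = ((\<Sum>j<s. p * (a j - b j)) - Sc + Sz) / q"
    unfolding Sc_def Sz_def by (simp add: sum.distrib sum_subtractf)
  also have "(\<Sum>j<s. p * (a j - b j)) = 0" using sum_ab by (simp add: sum_distrib_left[symmetric])
  finally have key: "(\<Sum>j<s. (a j - b j) * ((p - c j + z j) / q)) = (Sz - Sc) / q"
    by simp
  show ?thesis
  proof (cases "j0 = 0")
    case True
    have v1: "Vapp (\<lambda>j. (p - c j + z j) / q) j0 = (p - c 0 + z 0) / q + (Sz - Sc) / q / b 0"
      unfolding Vapp_def using True key by simp
    have v2: "Vapp c j0 = c 0 + Sc / b 0" and v3: "Vapp z j0 = z 0 + Sz / b 0"
      unfolding Vapp_def Sc_def Sz_def using True by simp_all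
    have "b 0 \<noteq> 0" using b_pos[OF s_pos] by simp
    then show ?thesis unfolding v1 v2 v3 by (cases "q = 0") (simp_all add: field_simps)
  next
    case False then show ?thesis unfolding Vapp_def by simp
  qed
qed

lemma Vapp_b: "(\<Sum>j<s. b j * Vapp c j) = (\<Sum>j<s. a j * c j)"
proof -
  define T where "T = (\<Sum>j'<s. (a j' - b j') * c j') / b 0"
  have "(\<Sum>j<s. b j * Vapp c j) = (\<Sum>j<s. b j * c j + (if j = 0 then b 0 * T else 0))"
    by (rule sum.cong) (auto simp: Vapp_def T_def[symmetric] distrib_left)
  also have "\<dots> = (\<Sum>j<s. b j * c j) + (\<Sum>j<s. if j = 0 then b 0 * T else 0)"
    by (rule sum.distrib)
  also have "(\<Sum>j<s. if j = 0 then b 0 * T else 0) = b 0 * T" using s_pos by simp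
  also have "b 0 * T = (\<Sum>j'<s. (a j' - b j') * c j')" unfolding T_def using b_pos[OF s_pos] by simp
  finally show ?thesis by (simp add: sum_subtractf algebra_simps)
qed

lemma Vapp_inj: assumes h: "\<And>j. j < s \<Longrightarrow> Vapp c j = 0" and j: "j < s" shows "c j = 0"
proof -
  have nz: "c j = 0" if "j < s" "j \<noteq> 0" for j using h[OF that(1)] that unfolding Vapp_def by simp
  have "(\<Sum>j<s. (a j - b j) * c j) = (\<Sum>j<s. if j = 0 then (a 0 - b 0) * c 0 else 0)"
    by (rule sum.cong) (auto simp: nz)
  also have "\<dots> = (a 0 - b 0) * c 0" using s_pos by simp
  finally have "Vapp c 0 = c 0 + (a 0 - b 0) * c 0 / b 0" unfolding Vapp_def by simp
  also have "\<dots> = c 0 * a 0 / b 0" using b_pos[OF s_pos] by (simp add: field_simps)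
  finally have "c 0 * a 0 / b 0 = 0" using h[OF s_pos] by simp
  then have "c 0 = 0" using a_pos[OF s_pos] b_pos[OF s_pos] by simp
  then show ?thesis using nz[OF j] by (cases "j = 0") auto
qed

lemma avgA_eq: "avg r \<alpha> X j = (\<Sum>u\<in>fibA j. X u) / a j"
  unfolding avg_def a_def by simp
lemma avgB_eq: "avg r \<beta> X j = (\<Sum>u\<in>fibB j. X u) / b j"
  unfolding avg_def b_def by simp

lemma sumX: "(\<Sum>j<s. a j * avg r \<alpha> X j) = (\<Sum>u<r. X u)"
proof -
  have "(\<Sum>j<s. a j * avg r \<alpha> X j) = (\<Sum>j<s. \<Sum>u\<in>fibA j. X u)"
  proof (rule sum.cong)
    fix j assume "j \<in> {..<s}"
    then have "a j \<noteq> 0" using a_pos by fastforce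
    then show "a j * avg r \<alpha> X j = (\<Sum>u\<in>fibA j. X u)" by (simp add: avgA_eq)
  qed simp
  then show ?thesis using groupA[of X] by simp
qed

lemma sum_fibB_const: "j < s \<Longrightarrow> (\<Sum>u\<in>fibB j. g (\<beta> u)) = b j * g j"
  unfolding b_def by simp

lemma fibB_split: assumes j: "j < s" shows "fibB j = insert (firstB j) {k\<in>NFB. \<beta> k = j}"
     "firstB j \<notin> {k\<in>NFB. \<beta> k = j}"
proof -
  have fj: "firstB j < r" "\<beta> (firstB j) = j" using firstB[OF j] by auto
  show "fibB j = insert (firstB j) {k\<in>NFB. \<beta> k = j}"
  proof (intro equalityI subsetI)
    fix u assume "u \<in> fibB j"
    then have u: "u < r" "\<beta> u = j" by auto
    show "u \<in> insert (firstB j) {k\<in>NFB. \<beta> k = j}"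
    proof (cases "u = fB u")
      case True then have "u = firstB j" unfolding fB_def using u by simp
      then show ?thesis by simp
    next
      case False then show ?thesis using u unfolding NFB_def by simp
    qed
  next
    fix u assume "u \<in> insert (firstB j) {k\<in>NFB. \<beta> k = j}"
    then show "u \<in> fibB j" using fj unfolding NFB_def by auto
  qed
  have "fB (firstB j) = firstB j" unfolding fB_def using fj by simp
  then show "firstB j \<notin> {k\<in>NFB. \<beta> k = j}" unfolding NFB_def by simp
qed

lemma Wf_block: assumes j: "j < s" shows "(\<Sum>k\<in>fibB j. Wf X k) = 0"
proof -
  have fj: "firstB j < r" "\<beta> (firstB j) = j" using firstB[OF j] by auto
  have fin: "finite {k\<in>NFB. \<beta> k = j}" unfolding NFB_def by auto
  have e0: "(\<Sum>k\<in>fibB j. Wf X k) = Wf X (firstB j) + (\<Sum>k\<in>{k\<in>NFB. \<beta> k = j}. Wf X k)"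
    unfolding fibB_split(1)[OF j] using fibB_split(2)[OF j] fin by simp
  have e2: "(\<Sum>k\<in>{k\<in>NFB. \<beta> k = j}. Wf X k) = (\<Sum>k\<in>{k\<in>NFB. \<beta> k = j}. D X (\<rho> k))"
    by (rule sum.cong) (auto simp: Wf_def)
  have e1: "Wf X (firstB j) = - (\<Sum>k\<in>{k\<in>NFB. \<beta> k = j}. D X (\<rho> k))"
    using fibB_split(2)[OF j] fj unfolding Wf_def by simp
  show ?thesis unfolding e0 e1 e2 by simp
qed

lemma Wf_sum: "(\<Sum>k<r. Wf X k) = 0"
proof -
  have "(\<Sum>j<s. \<Sum>k\<in>fibB j. Wf X k) = (\<Sum>j<s. 0)"
    by (rule sum.cong) (simp_all add: Wf_block)
  then show ?thesis using groupB[of "Wf X"] by simp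
qed

lemma NFA_lt: "m \<in> NFA \<Longrightarrow> m < r" unfolding NFA_def by simp

lemma D_shift: assumes m: "m < r" shows "D (Nx r s \<alpha> X) m = - D X m / real r"
proof -
  have "fA m < r" "\<alpha> (fA m) = \<alpha> m" using fA[OF m] by auto
  then show ?thesis unfolding D_def Nx_def using m by (simp add: field_simps)
qed

lemma Wf_shift: "Wf (Nx r s \<alpha> X) i = - Wf X i / real r"
proof (cases "i \<in> NFB")
  case True then show ?thesis unfolding Wf_def using D_shift rho_lt by simp
next
  case False
  have "(\<Sum>i'\<in>{i'\<in>NFB. \<beta> i' = \<beta> i}. D (Nx r s \<alpha> X) (\<rho> i')) = (\<Sum>i'\<in>{i'\<in>NFB. \<beta> i' = \<beta> i}. - D X (\<rho> i') / real r)"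
    by (rule sum.cong) (auto simp: D_shift rho_lt)
  then show ?thesis unfolding Wf_def using False by (simp add: sum_divide_distrib sum_negf)
qed

lemma avg_Nx: assumes j: "j < s"
  shows "avg r \<alpha> (Nx r s \<alpha> X) j = ((\<Sum>u<r. X u) - avg r \<alpha> X j + X (r + j)) / real r"
proof -
  define SX where "SX = (\<Sum>u<r. X u)"
  have "(\<Sum>u\<in>fibA j. Nx r s \<alpha> X u) = (\<Sum>u\<in>fibA j. (SX - X u + X (r + j)) / real r)"
    by (rule sum.cong) (auto simp: Nx_def SX_def)
  also have "\<dots> = (a j * SX - (\<Sum>u\<in>fibA j. X u) + a j * X (r + j)) / real r"
    by (simp add: sum_divide_distrib[symmetric] sum_subtractf sum.distrib a_def)
  finally have e: "(\<Sum>u\<in>fibA j. Nx r s \<alpha> X u) = (a j * SX - (\<Sum>u\<in>fibA j. X u) + a j * X (r + j)) / real r" .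
  have "a j \<noteq> 0" using a_pos[OF j] by simp
  then show ?thesis unfolding avgA_eq e SX_def[symmetric] by (simp add: field_simps)
qed

lemma sum_Vapp_beta: "(\<Sum>u<r. Vapp c (\<beta> u)) = (\<Sum>j<s. a j * c j)"
proof -
  have "(\<Sum>u<r. Vapp c (\<beta> u)) = (\<Sum>j<s. \<Sum>u\<in>fibB j. Vapp c (\<beta> u))" by (rule groupB)
  also have "\<dots> = (\<Sum>j<s. b j * Vapp c j)" by (rule sum.cong) (simp_all add: b_def)
  finally show ?thesis using Vapp_b by simp
qed

lemma avgB_Papp: assumes j: "j < s" shows "avg r \<beta> (Papp X) j = Vapp (avg r \<alpha> X) j"
proof -
  have "(\<Sum>u\<in>fibB j. Papp X u) = (\<Sum>u\<in>fibB j. Vapp (avg r \<alpha> X) (\<beta> u) + Wf X u)"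
    by (rule sum.cong) (auto simp: Papp_def)
  also have "\<dots> = b j * Vapp (avg r \<alpha> X) j"
    by (simp add: sum.distrib Wf_block[OF j] b_def)
  finally show ?thesis using b_pos[OF j] unfolding avgB_eq by simp
qed

lemma Papp_comm: assumes i: "i < r + s" shows "Papp (Nx r s \<alpha> X) i = Nx r s \<beta> (Papp X) i"
proof (cases "i < r")
  case True
  define SX where "SX = (\<Sum>u<r. X u)"
  define c where "c = avg r \<alpha> X"
  define z where "z = (\<lambda>j. X (r + j))"
  have bi: "\<beta> i < s" using \<beta>_lt True by simp
  have "Papp (Nx r s \<alpha> X) i = Vapp (avg r \<alpha> (Nx r s \<alpha> X)) (\<beta> i) + Wf (Nx r s \<alpha> X) i"
    unfolding Papp_def using True by simp
  also have "Vapp (avg r \<alpha> (Nx r s \<alpha> X)) (\<beta> i) = Vapp (\<lambda>j. (SX - c j + z j) / real r) (\<beta> i)"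
    by (rule Vapp_cong[OF _ bi]) (simp add: avg_Nx SX_def c_def z_def)
  also have "\<dots> = (SX - Vapp c (\<beta> i) + Vapp z (\<beta> i)) / real r" by (rule Vapp_aff[OF bi])
  also have "Wf (Nx r s \<alpha> X) i = - Wf X i / real r" by (rule Wf_shift)
  finally have L: "Papp (Nx r s \<alpha> X) i = (SX - Vapp c (\<beta> i) + Vapp z (\<beta> i)) / real r - Wf X i / real r"
    by simp
  have "(\<Sum>u<r. Papp X u) = (\<Sum>u<r. Vapp c (\<beta> u) + Wf X u)"
    by (rule sum.cong) (simp_all add: Papp_def c_def)
  also have "\<dots> = SX" unfolding sum.distrib Wf_sum sum_Vapp_beta c_def SX_def sumX by simp
  finally have S: "(\<Sum>u<r. Papp X u) = SX" .
  have P1: "Papp X i = Vapp c (\<beta> i) + Wf X i" unfolding Papp_def c_def using True by simp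
  have P2: "Papp X (r + \<beta> i) = Vapp z (\<beta> i)" unfolding Papp_def z_def by simp
  have R: "Nx r s \<beta> (Papp X) i = (SX - (Vapp c (\<beta> i) + Wf X i) + Vapp z (\<beta> i)) / real r"
    unfolding Nx_def using True S P1 P2 by simp
  have "real r \<noteq> 0" using True by simp
  then show ?thesis unfolding L R by (simp add: field_simps)
next
  case False
  then have j: "i - r < s" using i by simp
  have "Papp (Nx r s \<alpha> X) i = Vapp (\<lambda>j. Nx r s \<alpha> X (r + j)) (i - r)"
    unfolding Papp_def using False by simp
  also have "\<dots> = Vapp (avg r \<alpha> X) (i - r)"
    by (rule Vapp_cong[OF _ j]) (simp add: Nx_def)
  also have "\<dots> = avg r \<beta> (Papp X) (i - r)" using avgB_Papp[OF j] by simp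
  also have "\<dots> = Nx r s \<beta> (Papp X) i" unfolding Nx_def using False by simp
  finally show ?thesis .
qed

lemma Papp_inj: assumes h: "\<And>i. i < r + s \<Longrightarrow> Papp X i = 0" and i: "i < r + s" shows "X i = 0"
proof -
  have z: "X (r + j) = 0" if j: "j < s" for j
  proof -
    have "Vapp (\<lambda>j. X (r + j)) j = 0" if "j < s" for j using h[of "r + j"] that unfolding Papp_def by simp
    then show ?thesis using Vapp_inj[of "\<lambda>j. X (r + j)"] j by blast
  qed
  have c: "avg r \<alpha> X j = 0" if j: "j < s" for j
  proof -
    have "Vapp (avg r \<alpha> X) j = 0" if j: "j < s" for j
    proof -
      have "avg r \<beta> (Papp X) j = 0" unfolding avgB_eq using h by (simp add: sum.neutral)
      then show ?thesis using avgB_Papp[OF j] by simp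
    qed
    then show ?thesis using Vapp_inj[of "avg r \<alpha> X"] j by blast
  qed
  have V0: "Vapp (avg r \<alpha> X) j = 0" if "j < s" for j
  proof -
    have "Vapp (avg r \<alpha> X) j = Vapp (\<lambda>_. 0) j" by (rule Vapp_cong[OF _ that]) (simp add: c)
    then show ?thesis unfolding Vapp_def by simp
  qed
  have W0: "Wf X i = 0" if "i < r" for i
    using h[of i] that V0[of "\<beta> i"] \<beta>_lt[OF that] unfolding Papp_def by simp
  have eqf: "X m = X (fA m)" if m: "m < r" for m
  proof (cases "m \<in> NFA")
    case True
    then obtain i where i: "i \<in> NFB" "\<rho> i = m" using rho_surj by blast
    then have "i < r" unfolding NFB_def by simp
    then have "Wf X i = 0" using W0 by simp
    then have "D X (\<rho> i) = 0" using i(1) unfolding Wf_def by simp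
    then have "D X m = 0" using i(2) by simp
    then show ?thesis unfolding D_def by simp
  next
    case False then have "m = fA m" using m unfolding NFA_def by simp
    then show ?thesis by simp
  qed
  show ?thesis
  proof (cases "i < r")
    case False then show ?thesis using z[of "i - r"] i by simp
  next
    case True
    define j where "j = \<alpha> i"
    have j: "j < s" unfolding j_def using \<alpha>_lt True by simp
    have "(\<Sum>u\<in>fibA j. X u) = (\<Sum>u\<in>fibA j. X (fA i))"
    proof (rule sum.cong)
      fix u assume "u \<in> fibA j"
      then have "u < r" "\<alpha> u = \<alpha> i" unfolding j_def by auto
      then show "X u = X (fA i)" using eqf[of u] unfolding fA_def by simp
    qed simp
    also have "\<dots> = a j * X (fA i)" unfolding a_def by simp
    finally have "avg r \<alpha> X j = X (fA i)" using a_pos[OF j] unfolding avgA_eq by simp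
    then show ?thesis using c[OF j] eqf[OF True] by simp
  qed
qed

definition Vm :: "nat \<Rightarrow> nat \<Rightarrow> real" where
  "Vm j j' = (if j = j' then 1 else 0) + (if j = 0 then (a j' - b j') / b 0 else 0)"
definition ind :: "nat \<Rightarrow> nat \<Rightarrow> real" where "ind p k = (if k = p then 1 else 0)"
definition We :: "nat \<Rightarrow> nat \<Rightarrow> real" where
  "We i k = (if i \<in> NFB then ind (\<rho> i) k - ind (fA (\<rho> i)) k
     else - (\<Sum>i'\<in>{i'\<in>NFB. \<beta> i' = \<beta> i}. ind (\<rho> i') k - ind (fA (\<rho> i')) k))"
definition pe :: "nat \<times> nat \<Rightarrow> real" where
  "pe = (\<lambda>(i,k). if i < r \<and> k < r then Vm (\<beta> i) (\<alpha> k) / a (\<alpha> k) + We i k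
      else if r \<le> i \<and> r \<le> k then Vm (i - r) (k - r) else 0)"

lemma Vm_sum: assumes j: "j < s" shows "(\<Sum>j'<s. Vm j j' * c j') = Vapp c j"
proof -
  have "(\<Sum>j'<s. Vm j j' * c j') = (\<Sum>j'<s. (if j = j' then c j' else 0) + (if j = 0 then (a j' - b j') * c j' / b 0 else 0))"
    by (rule sum.cong) (auto simp: Vm_def algebra_simps)
  also have "\<dots> = c j + (if j = 0 then (\<Sum>j'<s. (a j' - b j') * c j') / b 0 else 0)"
    using j by (simp add: sum.distrib sum_divide_distrib)
  finally show ?thesis unfolding Vapp_def .
qed

lemma ind_sum: assumes "p < r" shows "(\<Sum>k<r. ind p k * X k) = X p"
proof -
  have "(\<Sum>k<r. ind p k * X k) = (\<Sum>k<r. if k = p then X p else 0)"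
    by (rule sum.cong) (auto simp: ind_def)
  then show ?thesis using assms by simp
qed

lemma We_sum: "(\<Sum>k<r. We i k * X k) = Wf X i"
proof (cases "i \<in> NFB")
  case True
  have l: "\<rho> i < r" "fA (\<rho> i) < r" using rho_lt[OF True] fA by auto
  have "(\<Sum>k<r. We i k * X k) = (\<Sum>k<r. ind (\<rho> i) k * X k) - (\<Sum>k<r. ind (fA (\<rho> i)) k * X k)"
    unfolding We_def using True by (simp add: sum_subtractf left_diff_distrib)
  then show ?thesis unfolding Wf_def D_def using True l by (simp add: ind_sum)
next
  case False
  let ?I = "{i'\<in>NFB. \<beta> i' = \<beta> i}"
  have "(\<Sum>k<r. We i k * X k) = - (\<Sum>k<r. \<Sum>i'\<in>?I. (ind (\<rho> i') k - ind (fA (\<rho> i')) k) * X k)"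
    unfolding We_def using False by (simp add: sum_distrib_right sum_negf)
  also have "\<dots> = - (\<Sum>i'\<in>?I. \<Sum>k<r. (ind (\<rho> i') k - ind (fA (\<rho> i')) k) * X k)"
    by (subst sum.swap) simp
  also have "\<dots> = - (\<Sum>i'\<in>?I. D X (\<rho> i'))"
  proof -
    have "(\<Sum>k<r. (ind (\<rho> i') k - ind (fA (\<rho> i')) k) * X k) = D X (\<rho> i')" if "i' \<in> ?I" for i'
    proof -
      have l: "\<rho> i' < r" "fA (\<rho> i') < r" using rho_lt that fA by auto
      then show ?thesis unfolding D_def by (simp add: left_diff_distrib sum_subtractf ind_sum)
    qed
    then show ?thesis by simp
  qed
  finally show ?thesis unfolding Wf_def using False by simp
qed

lemma V_sum: assumes j: "j < s" shows "(\<Sum>k<r. Vm j (\<alpha> k) / a (\<alpha> k) * X k) = Vapp (avg r \<alpha> X) j"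
proof -
  have "(\<Sum>k<r. Vm j (\<alpha> k) / a (\<alpha> k) * X k) = (\<Sum>j'<s. \<Sum>k\<in>fibA j'. Vm j (\<alpha> k) / a (\<alpha> k) * X k)"
    by (rule groupA)
  also have "\<dots> = (\<Sum>j'<s. Vm j j' * avg r \<alpha> X j')"
  proof (rule sum.cong)
    fix j' assume "j' \<in> {..<s}"
    have "(\<Sum>k\<in>fibA j'. Vm j (\<alpha> k) / a (\<alpha> k) * X k) = (\<Sum>k\<in>fibA j'. Vm j j' / a j' * X k)"
      by (rule sum.cong) auto
    then show "(\<Sum>k\<in>fibA j'. Vm j (\<alpha> k) / a (\<alpha> k) * X k) = Vm j j' * avg r \<alpha> X j'"
      unfolding avgA_eq by (simp add: sum_distrib_left sum_divide_distrib)
  qed simp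
  finally show ?thesis using Vm_sum[OF j] by simp
qed

lemma app_pe: assumes i: "i < r + s" shows "app (r + s) pe X i = Papp X i"
proof -
  have sp: "app (r + s) pe X i = (\<Sum>k<r. pe (i,k) * X k) + (\<Sum>j<s. pe (i, r + j) * X (r + j))"
    unfolding app_def by (rule sum_split)
  show ?thesis
  proof (cases "i < r")
    case True
    have "(\<Sum>j<s. pe (i, r + j) * X (r + j)) = 0" using True by (simp add: pe_def)
    moreover have "(\<Sum>k<r. pe (i,k) * X k) = (\<Sum>k<r. Vm (\<beta> i) (\<alpha> k) / a (\<alpha> k) * X k) + (\<Sum>k<r. We i k * X k)"
      using True by (simp add: pe_def sum.distrib distrib_right)
    ultimately show ?thesis unfolding sp Papp_def using True V_sum[OF \<beta>_lt[OF True]] We_sum by simp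
  next
    case False
    have "(\<Sum>k<r. pe (i,k) * X k) = 0" using False by (simp add: pe_def)
    moreover have "(\<Sum>j<s. pe (i, r + j) * X (r + j)) = (\<Sum>j<s. Vm (i - r) j * X (r + j))"
      using False by (simp add: pe_def)
    ultimately show ?thesis unfolding sp Papp_def using False Vm_sum[of "i - r"] i by simp
  qed
qed

lemma app_cong: "(\<And>m. m < n \<Longrightarrow> X m = Y m) \<Longrightarrow> app n f X i = app n f Y i"
  unfolding app_def by (auto intro!: sum.cong)

lemma app_ind: "k < n \<Longrightarrow> app n f (ind k) m = f (m, k)"
proof -
  assume k: "k < n"
  have "app n f (ind k) m = (\<Sum>m'<n. if m' = k then f (m, k) else 0)"
    unfolding app_def by (rule sum.cong) (auto simp: ind_def)
  then show ?thesis using k by simp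
qed

lemma mat_mult_entry: assumes "i < n" "k < n"
  shows "(mat n n f * mat n n g) $$ (i, k) = app n f (\<lambda>m. g (m, k)) i"
  using assms unfolding app_def by (simp add: scalar_prod_def atLeast0LessThan)

lemma PM_comm: "mat (r+s) (r+s) pe * mat (r+s) (r+s) (nf r s \<alpha>) = mat (r+s) (r+s) (nf r s \<beta>) * mat (r+s) (r+s) pe"
proof (rule eq_matI)
  fix i k assume i: "i < dim_row (mat (r+s) (r+s) (nf r s \<beta>) * mat (r+s) (r+s) pe)"
    and k: "k < dim_col (mat (r+s) (r+s) (nf r s \<beta>) * mat (r+s) (r+s) pe)"
  then have i: "i < r + s" and k: "k < r + s" by auto
  have "(mat (r+s) (r+s) pe * mat (r+s) (r+s) (nf r s \<alpha>)) $$ (i, k) = app (r+s) pe (\<lambda>m. nf r s \<alpha> (m, k)) i"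
    by (rule mat_mult_entry[OF i k])
  also have "\<dots> = app (r+s) pe (Nx r s \<alpha> (ind k)) i"
    by (rule app_cong) (simp add: app_ind[OF k, symmetric] app_nf[OF \<alpha>_lt])
  also have "\<dots> = Papp (Nx r s \<alpha> (ind k)) i" by (rule app_pe[OF i])
  also have "\<dots> = Nx r s \<beta> (Papp (ind k)) i" by (rule Papp_comm[OF i])
  also have "\<dots> = app (r+s) (nf r s \<beta>) (Papp (ind k)) i" by (rule app_nf[OF \<beta>_lt i, symmetric])
  also have "\<dots> = app (r+s) (nf r s \<beta>) (\<lambda>m. pe (m, k)) i"
    by (rule app_cong) (simp add: app_ind[OF k, symmetric] app_pe)
  also have "\<dots> = (mat (r+s) (r+s) (nf r s \<beta>) * mat (r+s) (r+s) pe) $$ (i, k)"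
    by (rule mat_mult_entry[OF i k, symmetric])
  finally show "(mat (r+s) (r+s) pe * mat (r+s) (r+s) (nf r s \<alpha>)) $$ (i, k) = (mat (r+s) (r+s) (nf r s \<beta>) * mat (r+s) (r+s) pe) $$ (i, k)" .
qed auto

lemma PM_det: "det (mat (r+s) (r+s) pe) \<noteq> 0"
proof
  assume "det (mat (r+s) (r+s) pe) = 0"
  then obtain v where v: "v \<in> carrier_vec (r+s)" "v \<noteq> 0\<^sub>v (r+s)" "mat (r+s) (r+s) pe *\<^sub>v v = 0\<^sub>v (r+s)"
    using det_0_iff_vec_prod_zero_field[of "mat (r+s) (r+s) pe" "r+s"] by auto
  have h: "Papp (\<lambda>m. v $ m) i = 0" if i: "i < r + s" for i
  proof -
    have "(mat (r+s) (r+s) pe *\<^sub>v v) $ i = app (r+s) pe (\<lambda>m. v $ m) i"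
      using i v(1) unfolding app_def by (simp add: scalar_prod_def atLeast0LessThan)
    then show ?thesis using v(3) i app_pe[OF i] by simp
  qed
  have "v = 0\<^sub>v (r+s)"
    by (rule eq_vecI) (use v(1) Papp_inj[OF h] in auto)
  then show False using v(2) by simp
qed

lemma charpoly_main:
  "char_poly (1\<^sub>m (r+s) - mat (r+s) (r+s) (nf r s \<alpha>)) = char_poly (1\<^sub>m (r+s) - mat (r+s) (r+s) (nf r s \<beta>))"
  "char_poly (1\<^sub>m (r+s) + mat (r+s) (r+s) (nf r s \<alpha>)) = char_poly (1\<^sub>m (r+s) + mat (r+s) (r+s) (nf r s \<beta>))"
proof -
  let ?n = "r + s"
  let ?P = "mat ?n ?n pe" and ?A = "mat ?n ?n (nf r s \<alpha>)" and ?B = "mat ?n ?n (nf r s \<beta>)"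
  have c: "?P \<in> carrier_mat ?n ?n" "?A \<in> carrier_mat ?n ?n" "?B \<in> carrier_mat ?n ?n" by auto
  have "?P * (1\<^sub>m ?n - ?A) = ?P * 1\<^sub>m ?n - ?P * ?A"
    by (rule mult_minus_distrib_mat[OF c(1) one_carrier_mat c(2)])
  also have "\<dots> = 1\<^sub>m ?n * ?P - ?B * ?P" using c PM_comm by simp
  also have "\<dots> = (1\<^sub>m ?n - ?B) * ?P"
    by (rule minus_mult_distrib_mat[symmetric, OF one_carrier_mat c(3) c(1)])
  finally have e1: "?P * (1\<^sub>m ?n - ?A) = (1\<^sub>m ?n - ?B) * ?P" .
  have "?P * (1\<^sub>m ?n + ?A) = ?P * 1\<^sub>m ?n + ?P * ?A"
    by (rule mult_add_distrib_mat[OF c(1) one_carrier_mat c(2)])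
  also have "\<dots> = 1\<^sub>m ?n * ?P + ?B * ?P" using c PM_comm by simp
  also have "\<dots> = (1\<^sub>m ?n + ?B) * ?P"
    by (rule add_mult_distrib_mat[symmetric, OF one_carrier_mat c(3) c(1)])
  finally have e2: "?P * (1\<^sub>m ?n + ?A) = (1\<^sub>m ?n + ?B) * ?P" .
  show "char_poly (1\<^sub>m ?n - ?A) = char_poly (1\<^sub>m ?n - ?B)"
    by (rule char_poly_intertwine[OF c(1) _ _ PM_det e1]) (use c in auto)
  show "char_poly (1\<^sub>m ?n + ?A) = char_poly (1\<^sub>m ?n + ?B)"
    by (rule char_poly_intertwine[OF c(1) _ _ PM_det e2]) (use c in auto)
qed
end


lemma elem_lt: assumes pos: "\<forall>x\<in>set as. 0 < x" and l: "2 \<le> length as" and j: "j < length as"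
  shows "as ! j < sum_list (as::nat list)"
proof -
  define j' :: nat where "j' = (if j = 0 then 1 else 0)"
  have j': "j' < length as" "j' \<noteq> j" unfolding j'_def using l by auto
  have "as ! j' > 0" using pos j' by simp
  have "as ! j + as ! j' = (\<Sum>i\<in>{j, j'}. as ! i)" using j' by simp
  also have "\<dots> \<le> (\<Sum>i\<in>{0..<length as}. as ! i)" by (rule sum_mono2) (use j j' in auto)
  also have "\<dots> = sum_list as" by (simp add: sum_list_sum_nth)
  finally show ?thesis using \<open>as ! j' > 0\<close> by simp
qed

lemma part_facts: assumes "is_partition s r A" "as = sorted_list_of_multiset A"
  shows "length as = s" "sum_list as = r" "\<forall>x\<in>set as. 0 < x" "mset as = A"
proof -
  have m: "mset as = A" using assms(2) by simp
  show "mset as = A" by (rule m)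
  show "length as = s" using assms(1) m unfolding is_partition_def by (metis size_mset)
  show "sum_list as = r" using assms(1) m unfolding is_partition_def by (metis sum_mset_sum_list)
  show "\<forall>x\<in>set as. 0 < x" using assms(1) m unfolding is_partition_def by (metis set_mset_mset)
qed

lemma blocks_inst:
  assumes "length as = s" "sum_list as = r" "\<forall>x\<in>set as. 0 < x"
    and "length bs = s" "sum_list bs = r" "\<forall>x\<in>set bs. 0 < x" and "0 < s"
  shows "blocks r s (blk as) (blk bs)"
proof
  show "\<And>u. u < r \<Longrightarrow> blk as u < s" using blk_lt assms by metis
  show "\<And>u. u < r \<Longrightarrow> blk bs u < s" using blk_lt assms by metis
  show "\<And>j. j < s \<Longrightarrow> 0 < card {u. u < r \<and> blk as u = j}" using blk_card assms by (metis nth_mem)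
  show "\<And>j. j < s \<Longrightarrow> 0 < card {u. u < r \<and> blk bs u = j}" using blk_card assms by (metis nth_mem)
  show "0 < s" by fact
qed

lemma lap_eq: "std_laplacian (r+s) (Egr r s g) = 1\<^sub>m (r+s) - mat (r+s) (r+s) (nf r s g)"
  "signless_std_laplacian (r+s) (Egr r s g) = 1\<^sub>m (r+s) + mat (r+s) (r+s) (nf r s g)"
  unfolding std_laplacian_def signless_std_laplacian_def nf_def
  by (rule eq_matI; auto)+

lemma deg_vals: assumes "length as = s" "sum_list as = r" and v: "v < r + s"
  shows "gdeg (r+s) (Egr r s (blk as)) v = (if v < r then r else as ! (v - r))"
proof (cases "v < r")
  case True then show ?thesis using deg_w[of r "blk as" s v] blk_lt assms by metis
next
  case False
  then have "gdeg (r+s) (Egr r s (blk as)) v = card {u. u < r \<and> blk as u = v - r}"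
    using deg_c[of r v s] v by simp
  also have "\<dots> = as ! (v - r)" using blk_card[of "v - r" as] assms False by simp
  finally show ?thesis using False by simp
qed

lemma mset_deg: assumes "length as = s"
  shows "image_mset (\<lambda>v. as ! (v - r)) (mset_set {r..<r+s}) = mset as"
proof -
  have "mset_set {r..<r+s} = image_mset (\<lambda>j. r + j) (mset_set {..<s})"
  proof -
    have "(\<lambda>j. r + j) ` {..<s} = {r..<r+s}"
    proof (intro equalityI subsetI)
      fix x assume "x \<in> {r..<r+s}"
      then have "x - r \<in> {..<s}" "x = r + (x - r)" by auto
      then show "x \<in> (\<lambda>j. r + j) ` {..<s}" by blast
    qed auto
    then show ?thesis by (subst image_mset_mset_set) (auto simp: inj_on_def)
  qed
  then have "image_mset (\<lambda>v. as ! (v - r)) (mset_set {r..<r+s}) = image_mset (\<lambda>j. as ! j) (mset_set {..<s})"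
    by (simp add: multiset.map_comp comp_def)
  also have "\<dots> = mset (map (\<lambda>j. as ! j) [0..<s])" by (simp add: atLeast0LessThan)
  also have "\<dots> = mset as" using assms map_nth[of as] by simp
  finally show ?thesis .
qed

lemma noniso:
  assumes fa: "length as = s" "sum_list as = r" "\<forall>x\<in>set as. 0 < x"
    and fb: "length bs = s" "sum_list bs = r" "\<forall>x\<in>set bs. 0 < x" and s2: "2 \<le> s"
    and neq: "mset as \<noteq> mset bs"
  shows "\<not> graph_iso {..<r+s} (Egr r s (blk as)) {..<r+s} (Egr r s (blk bs))"
proof
  let ?n = "r + s"
  let ?EA = "Egr r s (blk as)" and ?EB = "Egr r s (blk bs)"
  let ?dA = "gdeg ?n ?EA" and ?dB = "gdeg ?n ?EB"
  assume "graph_iso {..<?n} ?EA {..<?n} ?EB"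
  then obtain f where f: "bij_betw f {..<?n} {..<?n}" and fE: "\<forall>u\<in>{..<?n}. \<forall>v\<in>{..<?n}. ?EA u v \<longleftrightarrow> ?EB (f u) (f v)"
    unfolding graph_iso_def by blast
  have inj: "inj_on f {..<?n}" using f bij_betw_imp_inj_on by blast
  have fimg: "f ` {..<?n} = {..<?n}" using f bij_betw_imp_surj_on by blast
  have deg: "?dB (f v) = ?dA v" if v: "v < ?n" for v
  proof -
    have "{u. u < ?n \<and> ?EB (f v) u} = f ` {u. u < ?n \<and> ?EA v u}"
    proof (intro equalityI subsetI)
      fix u assume "u \<in> {u. u < ?n \<and> ?EB (f v) u}"
      then have u: "u < ?n" "?EB (f v) u" by auto
      then obtain w where w: "w < ?n" "u = f w" using fimg by (metis imageE lessThan_iff)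
      then have "?EA v w" using fE v u by auto
      then show "u \<in> f ` {u. u < ?n \<and> ?EA v u}" using w by auto
    next
      fix u assume "u \<in> f ` {u. u < ?n \<and> ?EA v u}"
      then obtain w where w: "w < ?n" "?EA v w" "u = f w" by auto
      then have "?EB (f v) u" using fE v by auto
      moreover have "u < ?n" using w fimg by auto
      ultimately show "u \<in> {u. u < ?n \<and> ?EB (f v) u}" by simp
    qed
    moreover have "inj_on f {u. u < ?n \<and> ?EA v u}" using inj by (rule inj_on_subset) auto
    ultimately show ?thesis unfolding gdeg_def by (simp add: card_image)
  qed
  let ?C = "{r..<?n}"
  have fC: "f ` ?C \<subseteq> ?C"
  proof
    fix u assume "u \<in> f ` ?C"
    then obtain v where v: "v \<in> ?C" "u = f v" by auto
    have vn: "v < ?n" using v by simp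
    have "v - r < s" using v by auto
    then have lt: "as ! (v - r) < r" using elem_lt[of as "v - r"] fa s2 by simp
    have "?dB u = as ! (v - r)" using deg[OF vn] deg_vals[OF fa(1,2) vn] v by simp
    moreover have un: "u < ?n" using v fimg by auto
    ultimately have "\<not> u < r" using deg_vals[OF fb(1,2) un] lt by auto
    then show "u \<in> ?C" using un by simp
  qed
  have injC: "inj_on f ?C" using inj by (rule inj_on_subset) auto
  have fC': "f ` ?C = ?C" using endo_inj_surj[OF _ fC injC] by simp
  have "mset as = image_mset (\<lambda>v. as ! (v - r)) (mset_set ?C)" using mset_deg[OF fa(1)] by simp
  also have "\<dots> = image_mset (\<lambda>v. ?dB (f v)) (mset_set ?C)"
    by (rule image_mset_cong) (use deg deg_vals[OF fa(1,2)] in auto)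
  also have "\<dots> = image_mset ?dB (image_mset f (mset_set ?C))" by (simp add: multiset.map_comp comp_def)
  also have "image_mset f (mset_set ?C) = mset_set ?C" using image_mset_mset_set[OF injC] fC' by simp
  also have "image_mset ?dB (mset_set ?C) = image_mset (\<lambda>v. bs ! (v - r)) (mset_set ?C)"
    by (rule image_mset_cong) (use deg_vals[OF fb(1,2)] in auto)
  also have "\<dots> = mset bs" using mset_deg[OF fb(1)] by simp
  finally show False using neq by simp
qed

theorem mainTheorem5:
  fixes r s :: nat and A B :: "nat multiset"
  assumes "r \<ge> 4" and "2 \<le> s" and "s \<le> r - 1"
    and "is_partition s r A" and "is_partition s r B" and "A \<noteq> B"
  shows "\<not> graph_iso {..<Khat_card r A} (Khat_adj r A) {..<Khat_card r B} (Khat_adj r B)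
    \<and> isospectral (std_laplacian (Khat_card r A) (Khat_adj r A))
                   (std_laplacian (Khat_card r B) (Khat_adj r B))
    \<and> isospectral (signless_std_laplacian (Khat_card r A) (Khat_adj r A))
                   (signless_std_laplacian (Khat_card r B) (Khat_adj r B))"
proof -
  define as where "as = sorted_list_of_multiset A"
  define bs where "bs = sorted_list_of_multiset B"
  note fa = part_facts[OF assms(4) as_def]
  note fb = part_facts[OF assms(5) bs_def]
  have cA: "Khat_card r A = r + s" using assms(4) unfolding Khat_card_def is_partition_def by simp
  have cB: "Khat_card r B = r + s" using assms(5) unfolding Khat_card_def is_partition_def by simp
  have eA: "Khat_adj r A = Egr r s (blk as)" by (rule Khat_Egr) (use as_def fa in auto)
  have eB: "Khat_adj r B = Egr r s (blk bs)" by (rule Khat_Egr) (use bs_def fb in auto)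
  interpret blocks r s "blk as" "blk bs"
    by (rule blocks_inst) (use fa fb assms(2) in auto)
  have "\<not> graph_iso {..<r+s} (Egr r s (blk as)) {..<r+s} (Egr r s (blk bs))"
    by (rule noniso) (use fa fb assms(2,6) in auto)
  moreover have "isospectral (std_laplacian (r+s) (Egr r s (blk as))) (std_laplacian (r+s) (Egr r s (blk bs)))"
    unfolding isospectral_def lap_eq by (rule charpoly_main(1))
  moreover have "isospectral (signless_std_laplacian (r+s) (Egr r s (blk as))) (signless_std_laplacian (r+s) (Egr r s (blk bs)))"
    unfolding isospectral_def lap_eq by (rule charpoly_main(2))
  ultimately show ?thesis unfolding cA cB eA eB by simp
qed

end
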